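(* Let $\mathcal{M}$ be a test space and let $\mu\in\mathbb{W}$. Then $\|\mu\|_1=\sup\{\mu(a)-\mu(E\setminus a): E\in\mathcal{M},\ a\subseteq E\}$. Hence the norms $\|\cdot\|_{\mathcal{E}}$ and $\|\cdot\|_1$ on $\mathbb{W}$ are equivalent.
   Context: A test space is an irredundant collection $\mathcal{M}$ of nonempty sets (tests) with outcome set $X=\bigcup\mathcal{M}$; an event is a subset of a test. $\mathbb{W}$ is the space of functions $\mu:X\to\mathbb{R}$ such that $\|\mu\|_1:=\sup_{E\in\mathcal{M}}\sum_{x\in E}|\mu(x)|<\infty$ and there is a constant $c$ with $\sum_{x\in E}\mu(x)=c$ for all $E\in\mathcal{M}$. For an event $a$, $\mu(a)=\sum_{x\in a}\mu(x)$, and $\|\mu\|_{\mathcal{E}}=\sup\{|\mu(a)|: a \text{ an event}\}$. *)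

theory Defs
  imports "HOL-Analysis.Analysis"
begin

definition test_space :: "'a set set \<Rightarrow> bool" where
  "test_space M \<longleftrightarrow> (\<forall>E\<in>M. E \<noteq> {}) \<and> (\<forall>E\<in>M. \<forall>F\<in>M. E \<subseteq> F \<longrightarrow> E = F)"

definition outcomes :: "'a set set \<Rightarrow> 'a set" where
  "outcomes M = \<Union>M"

definition events :: "'a set set \<Rightarrow> 'a set set" where
  "events M = {a. \<exists>E\<in>M. a \<subseteq> E}"

definition wval :: "('a \<Rightarrow> real) \<Rightarrow> 'a set \<Rightarrow> real" where
  "wval \<mu> a = infsum \<mu> a"

definition norm1 :: "'a set set \<Rightarrow> ('a \<Rightarrow> real) \<Rightarrow> real" where
  "norm1 M \<mu> = (SUP E\<in>M. infsum (\<lambda>x. \<bar>\<mu> x\<bar>) E)"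

definition normE :: "'a set set \<Rightarrow> ('a \<Rightarrow> real) \<Rightarrow> real" where
  "normE M \<mu> = (SUP a\<in>events M. \<bar>wval \<mu> a\<bar>)"

text \<open>The space \<open>\<W>\<close>: functions \<open>\<mu>\<close> on \<open>X\<close> (represented as functions on the whole type;
  values outside \<open>X\<close> are irrelevant) with \<open>\<parallel>\<mu>\<parallel>\<^sub>1 < \<infinity>\<close>, i.e. the sums
  \<open>\<Sum>x\<in>E. |\<mu> x|\<close> over all tests (equivalently over all finite subsets of tests)
  are uniformly bounded, and with constant total weight \<open>c\<close> on every test.\<close>
definition W :: "'a set set \<Rightarrow> ('a \<Rightarrow> real) set" where
  "W M = {\<mu>. (\<exists>B. \<forall>E\<in>M. \<forall>F. finite F \<and> F \<subseteq> E \<longrightarrow> (\<Sum>x\<in>F. \<bar>\<mu> x\<bar>) \<le> B)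
             \<and> (\<exists>c. \<forall>E\<in>M. (\<mu> has_sum c) E)}"

end

theory Submission
  imports Defs
begin

lemma W_bound:
  assumes "\<nu> \<in> W M"
  obtains B where "\<And>E. E \<in> M \<Longrightarrow> (\<lambda>x. \<bar>\<nu> x\<bar>) summable_on E"
    "\<And>E. E \<in> M \<Longrightarrow> infsum (\<lambda>x. \<bar>\<nu> x\<bar>) E \<le> B"
proof -
  from assms obtain B where B: "\<forall>E\<in>M. \<forall>F. finite F \<and> F \<subseteq> E \<longrightarrow> (\<Sum>x\<in>F. \<bar>\<nu> x\<bar>) \<le> B"
    unfolding W_def by blast
  have s: "(\<lambda>x. \<bar>\<nu> x\<bar>) summable_on E" if "E \<in> M" for E
    by (rule nonneg_bdd_above_summable_on) (use B that in \<open>auto intro!: bdd_aboveI2\<close>)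
  have "infsum (\<lambda>x. \<bar>\<nu> x\<bar>) E \<le> B" if "E \<in> M" for E
    by (rule infsum_le_finite_sums[OF s[OF that]]) (use B that in auto)
  with s that show ?thesis by blast
qed

lemma absub:
  fixes \<nu> :: "'a \<Rightarrow> real"
  assumes "(\<lambda>x. \<bar>\<nu> x\<bar>) summable_on E" "a \<subseteq> E"
  shows "(\<lambda>x. \<bar>\<nu> x\<bar>) summable_on a" "\<nu> summable_on a"
    "\<bar>wval \<nu> a\<bar> \<le> infsum (\<lambda>x. \<bar>\<nu> x\<bar>) a"
proof -
  show s: "(\<lambda>x. \<bar>\<nu> x\<bar>) summable_on a" using summable_on_subset_banach assms by blast
  then show "\<nu> summable_on a" using abs_summable_summable[of \<nu> a] by simp
  show "\<bar>wval \<nu> a\<bar> \<le> infsum (\<lambda>x. \<bar>\<nu> x\<bar>) a"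
    using norm_infsum_bound[of \<nu> a] s by (simp add: wval_def)
qed

lemma split_le:
  fixes \<nu> :: "'a \<Rightarrow> real"
  assumes "(\<lambda>x. \<bar>\<nu> x\<bar>) summable_on E" "a \<subseteq> E"
  shows "infsum (\<lambda>x. \<bar>\<nu> x\<bar>) E = infsum (\<lambda>x. \<bar>\<nu> x\<bar>) a + infsum (\<lambda>x. \<bar>\<nu> x\<bar>) (E - a)"
proof -
  have e: "E = a \<union> (E - a)" using assms by blast
  have "infsum (\<lambda>x. \<bar>\<nu> x\<bar>) (a \<union> (E - a)) = infsum (\<lambda>x. \<bar>\<nu> x\<bar>) a + infsum (\<lambda>x. \<bar>\<nu> x\<bar>) (E - a)"
    by (rule infsum_Un_disjoint) (use absub(1)[OF assms] absub(1)[OF assms(1), of "E - a"] in auto)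
  then show ?thesis using e by simp
qed

lemma diff_le:
  fixes \<nu> :: "'a \<Rightarrow> real"
  assumes "(\<lambda>x. \<bar>\<nu> x\<bar>) summable_on E" "a \<subseteq> E"
  shows "wval \<nu> a - wval \<nu> (E - a) \<le> infsum (\<lambda>x. \<bar>\<nu> x\<bar>) E"
  using absub(3)[OF assms] absub(3)[OF assms(1), of "E - a"] split_le[OF assms] by auto

lemma diff_eq:
  fixes \<nu> :: "'a \<Rightarrow> real"
  assumes "(\<lambda>x. \<bar>\<nu> x\<bar>) summable_on E"
  defines "a \<equiv> {x\<in>E. \<nu> x \<ge> 0}"
  shows "wval \<nu> a - wval \<nu> (E - a) = infsum (\<lambda>x. \<bar>\<nu> x\<bar>) E"
proof -
  have "a \<subseteq> E" unfolding a_def by auto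
  have 1: "wval \<nu> a = infsum (\<lambda>x. \<bar>\<nu> x\<bar>) a"
    unfolding wval_def by (rule infsum_cong) (auto simp: a_def)
  have "wval \<nu> (E - a) = infsum (\<lambda>x. - \<bar>\<nu> x\<bar>) (E - a)"
    unfolding wval_def by (rule infsum_cong) (auto simp: a_def)
  also have "\<dots> = - infsum (\<lambda>x. \<bar>\<nu> x\<bar>) (E - a)" by (rule infsum_uminus)
  finally show ?thesis using 1 split_le[OF assms(1) \<open>a \<subseteq> E\<close>] by simp
qed

theorem lemmaC4:
  fixes M :: "'a set set" and \<mu> :: "'a \<Rightarrow> real"
  assumes "test_space M"
    and "\<mu> \<in> W M"
  shows "norm1 M \<mu> = Sup {wval \<mu> a - wval \<mu> (E - a) | E a. E \<in> M \<and> a \<subseteq> E}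
         \<and> (\<exists>c C. 0 < c \<and> 0 < C \<and>
           (\<forall>\<nu>\<in>W M. c * normE M \<nu> \<le> norm1 M \<nu> \<and> norm1 M \<nu> \<le> C * normE M \<nu>))"
proof (cases "M = {}")
  case True
  have "events M = {}" using True by (simp add: events_def)
  moreover have "{wval \<mu> a - wval \<mu> (E - a) | E a. E \<in> M \<and> a \<subseteq> E} = {}" using True by simp
  ultimately show ?thesis using True unfolding norm1_def normE_def
    by (intro conjI exI[of _ 1]) simp_all
next
  case ne: False
  have part1: "norm1 M \<nu> = Sup {wval \<nu> a - wval \<nu> (E - a) | E a. E \<in> M \<and> a \<subseteq> E}"
    if \<nu>: "\<nu> \<in> W M" for \<nu>
  proof -
    obtain B where s: "\<And>E. E \<in> M \<Longrightarrow> (\<lambda>x. \<bar>\<nu> x\<bar>) summable_on E"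
      and b: "\<And>E. E \<in> M \<Longrightarrow> infsum (\<lambda>x. \<bar>\<nu> x\<bar>) E \<le> B"
      using W_bound[OF \<nu>] by blast
    let ?S = "{wval \<nu> a - wval \<nu> (E - a) | E a. E \<in> M \<and> a \<subseteq> E}"
    let ?T = "(\<lambda>E. infsum (\<lambda>x. \<bar>\<nu> x\<bar>) E) ` M"
    have Sne: "?S \<noteq> {}" using ne by blast
    have Tne: "?T \<noteq> {}" using ne by blast
    have bT: "bdd_above ?T" using b by (auto intro!: bdd_aboveI2)
    have bS: "bdd_above ?S"
    proof (rule bdd_aboveI)
      fix t assume "t \<in> ?S"
      then obtain E a where E: "E \<in> M" "a \<subseteq> E" "t = wval \<nu> a - wval \<nu> (E - a)" by blast
      show "t \<le> B" using E diff_le[OF s[OF E(1)] E(2)] b[OF E(1)] by linarith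
    qed
    have "Sup ?T \<le> Sup ?S"
    proof (rule cSup_mono[OF Tne bS])
      fix t assume "t \<in> ?T"
      then obtain E where E: "E \<in> M" "t = infsum (\<lambda>x. \<bar>\<nu> x\<bar>) E" by blast
      show "\<exists>a\<in>?S. t \<le> a"
      proof (rule bexI[of _ "wval \<nu> {x\<in>E. \<nu> x \<ge> 0} - wval \<nu> (E - {x\<in>E. \<nu> x \<ge> 0})"])
        show "t \<le> wval \<nu> {x\<in>E. \<nu> x \<ge> 0} - wval \<nu> (E - {x\<in>E. \<nu> x \<ge> 0})"
          using E diff_eq[OF s[OF E(1)]] by simp
        have "{x\<in>E. \<nu> x \<ge> 0} \<subseteq> E" by auto
        then show "wval \<nu> {x\<in>E. \<nu> x \<ge> 0} - wval \<nu> (E - {x\<in>E. \<nu> x \<ge> 0}) \<in> ?S"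
          using E(1) by blast
      qed
    qed
    moreover have "Sup ?S \<le> Sup ?T"
    proof (rule cSup_mono[OF Sne bT])
      fix t assume "t \<in> ?S"
      then obtain E a where E: "E \<in> M" "a \<subseteq> E" "t = wval \<nu> a - wval \<nu> (E - a)" by blast
      show "\<exists>a\<in>?T. t \<le> a" using E diff_le[OF s[OF E(1)] E(2)] by blast
    qed
    ultimately show ?thesis unfolding norm1_def by simp
  qed
  have part2: "1 * normE M \<nu> \<le> norm1 M \<nu> \<and> norm1 M \<nu> \<le> 2 * normE M \<nu>"
    if \<nu>: "\<nu> \<in> W M" for \<nu>
  proof -
    obtain B where s: "\<And>E. E \<in> M \<Longrightarrow> (\<lambda>x. \<bar>\<nu> x\<bar>) summable_on E"
      and b: "\<And>E. E \<in> M \<Longrightarrow> infsum (\<lambda>x. \<bar>\<nu> x\<bar>) E \<le> B"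
      using W_bound[OF \<nu>] by blast
    have bT: "bdd_above ((\<lambda>E. infsum (\<lambda>x. \<bar>\<nu> x\<bar>) E) ` M)" using b by (auto intro!: bdd_aboveI2)
    have ev: "\<bar>wval \<nu> a\<bar> \<le> infsum (\<lambda>x. \<bar>\<nu> x\<bar>) E" if "E \<in> M" "a \<subseteq> E" for E a
    proof -
      have "\<bar>wval \<nu> a\<bar> \<le> infsum (\<lambda>x. \<bar>\<nu> x\<bar>) a" using absub(3)[OF s that(2)] that by blast
      also have "\<dots> \<le> infsum (\<lambda>x. \<bar>\<nu> x\<bar>) E"
        using split_le[OF s[OF that(1)] that(2)] infsum_nonneg[of "E - a" "\<lambda>x. \<bar>\<nu> x\<bar>"] by simp
      finally show ?thesis .
    qed
    have evne: "events M \<noteq> {}" using ne by (auto simp: events_def)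
    have bE: "bdd_above ((\<lambda>a. \<bar>wval \<nu> a\<bar>) ` events M)"
    proof (rule bdd_aboveI2)
      fix a assume "a \<in> events M"
      then obtain E where E: "E \<in> M" "a \<subseteq> E" by (auto simp: events_def)
      show "\<bar>wval \<nu> a\<bar> \<le> B" using ev[OF E] b[OF E(1)] by linarith
    qed
    have "normE M \<nu> \<le> norm1 M \<nu>"
      unfolding normE_def
    proof (rule cSUP_least[OF evne])
      fix a assume "a \<in> events M"
      then obtain E where E: "E \<in> M" "a \<subseteq> E" by (auto simp: events_def)
      have "infsum (\<lambda>x. \<bar>\<nu> x\<bar>) E \<le> norm1 M \<nu>" unfolding norm1_def by (rule cSUP_upper[OF E(1) bT])
      then show "\<bar>wval \<nu> a\<bar> \<le> norm1 M \<nu>" using ev[OF E] by linarith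
    qed
    moreover have "norm1 M \<nu> \<le> 2 * normE M \<nu>"
      unfolding norm1_def
    proof (rule cSUP_least[OF ne])
      fix E assume E: "E \<in> M"
      define a where "a = {x\<in>E. \<nu> x \<ge> 0}"
      have ae: "a \<in> events M" "E - a \<in> events M" using E by (auto simp: events_def a_def)
      have "\<bar>wval \<nu> a\<bar> \<le> normE M \<nu>" "\<bar>wval \<nu> (E - a)\<bar> \<le> normE M \<nu>"
        unfolding normE_def using cSUP_upper[OF ae(1) bE] cSUP_upper[OF ae(2) bE] by auto
      then show "infsum (\<lambda>x. \<bar>\<nu> x\<bar>) E \<le> 2 * normE M \<nu>"
        using diff_eq[OF s[OF E]] unfolding a_def by linarith
    qed
    ultimately show ?thesis by simp
  qed
  show ?thesis
  proof
    show "norm1 M \<mu> = Sup {wval \<mu> a - wval \<mu> (E - a) | E a. E \<in> M \<and> a \<subseteq> E}"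
      using part1[OF assms(2)] .
    show "\<exists>c C. 0 < c \<and> 0 < C \<and>
           (\<forall>\<nu>\<in>W M. c * normE M \<nu> \<le> norm1 M \<nu> \<and> norm1 M \<nu> \<le> C * normE M \<nu>)"
      by (rule exI[of _ 1], rule exI[of _ 2]) (use part2 in auto)
  qed
qed

end
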